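(* Let $\mathbb{H}$ be any real Hilbert space (of dimension at least $2$) and $T\in\mathbb{L}(\ell_4^2,\mathbb{H})$ of rank one with $\|T\|=1$. Then $T$ is an extreme contraction if and only if $M_T=\{\pm(1,0)\}$ or $M_T=\{\pm(0,1)\}$. In particular, if $\mathbb{H}=\ell_2^n$, then the rank one extreme contractions in $\mathbb{L}(\ell_4^2,\ell_2^n)$ are exactly the operators whose matrix representations with respect to the standard ordered bases are of the form $\begin{bmatrix} x_1&0\\ x_2&0\\ \vdots&\vdots\\ x_n&0\end{bmatrix}$ or $\begin{bmatrix} 0&x_1\\ 0&x_2\\ \vdots&\vdots\\ 0&x_n\end{bmatrix}$, where $x_1^2+x_2^2+\cdots+x_n^2=1$.
   Context: $\ell_q^m$ is $\mathbb{R}^m$ with the $q$-norm. $M_T=\{u\in\ell_4^2:\|u\|=1,\ \|Tu\|=\|T\|\}$. An extreme contraction is a norm one operator that is an extreme point of the closed unit ball of $\mathbb{L}(\ell_4^2,\mathbb{H})$ (bounded linear operators, operator norm). *)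

theory Defs
  imports "HOL-Analysis.Analysis"
begin

definition norm4 :: "real \<times> real \<Rightarrow> real" where
  "norm4 u = root 4 ((fst u) ^ 4 + (snd u) ^ 4)"

definition opnorm4 :: "(real \<times> real \<Rightarrow> 'h::real_normed_vector) \<Rightarrow> real" where
  "opnorm4 T = (SUP u\<in>{u. norm4 u = 1}. norm (T u))"

definition MT :: "(real \<times> real \<Rightarrow> 'h::real_normed_vector) \<Rightarrow> (real \<times> real) set" where
  "MT T = {u. norm4 u = 1 \<and> norm (T u) = opnorm4 T}"

definition unit_ball4 :: "(real \<times> real \<Rightarrow> 'h::real_normed_vector) set" where
  "unit_ball4 = {S. linear S \<and> opnorm4 S \<le> 1}"

definition extreme_contraction :: "(real \<times> real \<Rightarrow> 'h::real_normed_vector) \<Rightarrow> bool" where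
  "extreme_contraction T \<longleftrightarrow> linear T \<and> opnorm4 T = 1 \<and> T \<in> unit_ball4 \<and>
     (\<forall>S1\<in>unit_ball4. \<forall>S2\<in>unit_ball4. \<forall>t::real. 0 < t \<and> t < 1 \<and>
        T = (\<lambda>u. t *\<^sub>R S1 u + (1 - t) *\<^sub>R S2 u) \<longrightarrow> S1 = S2)"

end

theory Submission
  imports Defs
begin



lemma KI_ident:
  fixes s r x y :: real
  shows "(s^4+r^4)^3*(x^4+y^4) - (s^3*x+r^3*y)^4 =
     (r*x - s*y)^2 * ((s^8+3 * s^4*r^4+r^8)*(r*x+s*y)^2 + 2*r^2 * s^8*x^2 + 2 * s^2*r^8*y^2)"
  by algebra

lemma sq_le1: "(a::real)^4 \<le> 1 \<Longrightarrow> a^2 \<le> 1"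
proof -
  assume "a^4 \<le> 1"
  have e: "(a^2)^2 = a^4" by algebra
  have "(a^2)^2 \<le> 1" unfolding e by fact
  then show ?thesis using power_le_one_iff[of "a^2" 2] by simp
qed

lemma KI_st6: fixes \<phi> \<psi> P D \<mu> A B :: real
  assumes D0: "0<D" and \<mu>0: "0 < \<mu>" and st4: "\<phi>^2 \<le> 2*A" and st5: "\<psi>^2 \<le> 2*B"
   and st3: "\<mu>*B \<le> A" and st2': "2*D*A \<le> P"
  shows "D*\<phi>^2 \<le> P" "D*\<mu>*\<psi>^2 \<le> P"
proof -
  have "D*\<phi>^2 \<le> D*(2*A)" by (rule mult_left_mono[OF st4]) (use D0 in linarith)
  then show "D*\<phi>^2 \<le> P" using st2' by linarith
  have "0 \<le> D*\<mu>" using D0 \<mu>0 by simp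
  then have "D*\<mu>*\<psi>^2 \<le> D*\<mu>*(2*B)" by (rule mult_left_mono[OF st5])
  moreover have "D*\<mu>*(2*B) = 2*D*(\<mu>*B)" by algebra
  moreover have "2*D*(\<mu>*B) \<le> 2*D*A" by (rule mult_left_mono[OF st3]) (use D0 in linarith)
  ultimately show "D*\<mu>*\<psi>^2 \<le> P" using st2' by linarith
qed

lemma KI_core: fixes \<phi> \<psi> P D \<mu> \<delta> X M :: real
  assumes D0: "0<D" and D1: "D \<le> 1" and \<mu>0: "0 < \<mu>" and \<mu>1: "\<mu> \<le> 1" and \<delta>D: "\<delta> = D*\<mu>/4"
   and st6a: "D*\<phi>^2 \<le> P" and st6b: "D*\<mu>*\<psi>^2 \<le> P" and id2: "M*X = \<phi>^4 + \<psi>^2*P"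
   and m3: "M \<le> 1" and X0: "0 \<le> X"
  shows "(\<phi>^2+\<delta>^2*\<psi>^2)^2 \<le> X"
proof -
  have \<delta>0: "0 < \<delta>"
  proof -
    have "0 < D*\<mu>" using D0 \<mu>0 by simp
    then show ?thesis using \<delta>D by simp
  qed
  have \<delta>D4: "\<delta> \<le> D/4"
  proof -
    have "D*\<mu> \<le> D*1" by (rule mult_left_mono[OF \<mu>1]) (use D0 in linarith)
    then show ?thesis using \<delta>D by linarith
  qed
  have \<delta>1: "\<delta> \<le> 1/4" using \<delta>D4 D1 by linarith
  have c1: "2*\<delta>^2 \<le> D/2"
  proof -
    have "\<delta>^2 = \<delta>*\<delta>" by (simp add: power2_eq_square)
    also have "\<dots> \<le> \<delta>*(1/4)" by (rule mult_left_mono[OF \<delta>1]) (use \<delta>0 in simp)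
    finally show ?thesis using \<delta>D4 D0 by linarith
  qed
  have c2: "\<delta>^4 \<le> D*\<mu>/2"
  proof -
    have "\<delta>^3 \<le> 1" by (rule power_le_one) (use \<delta>0 \<delta>1 in auto)
    have "\<delta>^4 = \<delta>*\<delta>^3" by algebra
    also have "\<dots> \<le> \<delta>*1" by (rule mult_left_mono[OF \<open>\<delta>^3 \<le> 1\<close>]) (use \<delta>0 in simp)
    finally have "\<delta>^4 \<le> \<delta>" by simp
    moreover have "0 < D*\<mu>" using D0 \<mu>0 by simp
    ultimately show ?thesis using \<delta>D by linarith
  qed
  have st7: "2*\<delta>^2*\<phi>^2 + \<delta>^4*\<psi>^2 \<le> P"
  proof -
    have a: "2*\<delta>^2*\<phi>^2 \<le> (D/2)*\<phi>^2" by (rule mult_right_mono[OF c1]) simp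
    have b: "\<delta>^4*\<psi>^2 \<le> (D*\<mu>/2)*\<psi>^2" by (rule mult_right_mono[OF c2]) simp
    have c: "(D/2)*\<phi>^2 = (D*\<phi>^2)/2" "(D*\<mu>/2)*\<psi>^2 = (D*\<mu>*\<psi>^2)/2" by simp_all
    show ?thesis using a b c st6a st6b by linarith
  qed
  have st8: "\<psi>^2*(2*\<delta>^2*\<phi>^2 + \<delta>^4*\<psi>^2) \<le> \<psi>^2*P"
    by (rule mult_left_mono[OF st7]) simp
  have id1: "(\<phi>^2 + \<delta>^2*\<psi>^2)^2 = \<phi>^4 + \<psi>^2*(2*\<delta>^2*\<phi>^2 + \<delta>^4*\<psi>^2)" by algebra
  have "M*X \<le> 1*X" by (rule mult_right_mono[OF m3 X0])
  then show ?thesis using id1 id2 st8 by linarith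
qed
lemma lin1: fixes a b c e u v :: real
  assumes "2*(a+b) - c = e" "a \<le> u" "b \<le> v" "0 \<le> e" shows "c \<le> 2*(u+v)"
proof -
  have "c = 2*a + 2*b - e" using assms(1) by simp
  then show ?thesis using assms(2-4) by simp
qed
lemma lin2: "A - C = E \<Longrightarrow> 0 \<le> E \<Longrightarrow> C \<le> (A::real)" by linarith
lemma lin3: "P = Z + W \<Longrightarrow> 0 \<le> Z \<Longrightarrow> W \<le> (P::real)" by linarith
lemma lin4: "a - b = c \<Longrightarrow> a = b + (c::real)" by linarith
lemma lin5: "M = a + b \<Longrightarrow> a \<le> X \<Longrightarrow> b \<le> Y \<Longrightarrow> M \<le> X + (Y::real)" by linarith

lemma KI:
  fixes s r x y :: real
  assumes sn: "s \<noteq> 0" and rn: "r \<noteq> 0" and m: "s^4+r^4 \<le> 1"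
  shows "((s^3*x+r^3*y)^2 + (r^8 * s^8/4)^2*(r*x-s*y)^2)^2 \<le> x^4+y^4"
proof -
  have s4: "s^4 \<le> 1" and r4: "r^4 \<le> 1"
  proof -
    have "0 \<le> r^4" "0 \<le> s^4" by simp_all
    then show "s^4 \<le> 1" "r^4 \<le> 1" using m by linarith+
  qed
  have s2: "s^2 \<le> 1" using sq_le1[OF s4] .
  have r2: "r^2 \<le> 1" using sq_le1[OF r4] .
  have s2p: "0 < s^2" and r2p: "0 < r^2" using sn rn by auto
  have s6: "s^6 \<le> 1" and r6: "r^6 \<le> 1"
  proof -
    have "s^6 = s^2* s^4" "r^6 = r^2*r^4" by algebra+
    moreover have "s^2* s^4 \<le> 1" using s2 s4 s2p by (intro mult_le_one) auto
    moreover have "r^2*r^4 \<le> 1" using r2 r4 r2p by (intro mult_le_one) auto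
    ultimately show "s^6 \<le> 1" "r^6 \<le> 1" by auto
  qed
  have s6p: "0 < s^6" and r6p: "0 < r^6" using sn rn
    by (simp_all add: zero_less_power_eq)
  have D0: "0 < r^2 * s^2" using s2p r2p by simp
  have D1: "r^2 * s^2 \<le> 1" using s2 r2 s2p r2p by (intro mult_le_one) auto
  have \<mu>0: "0 < s^6 * r^6" using s6p r6p by simp
  have \<mu>1: "s^6 * r^6 \<le> 1" using s6 r6 s6p r6p by (intro mult_le_one) auto
  have \<delta>D: "r^8 * s^8/4 = (r^2 * s^2)*(s^6 * r^6)/4" by algebra
  have K0: "0 \<le> (s^8+3 * s^4*r^4+r^8)*(r*x+s*y)^2"
    by (intro mult_nonneg_nonneg add_nonneg_nonneg) simp_all
  have st2': "2*(r^2 * s^2)*(s^6*x^2 + r^6*y^2) \<le>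
      (s^8+3 * s^4*r^4+r^8)*(r*x+s*y)^2 + 2*r^2 * s^8*x^2 + 2 * s^2*r^8*y^2"
  proof (rule lin3[OF _ K0])
    show "(s^8+3 * s^4*r^4+r^8)*(r*x+s*y)^2 + 2*r^2 * s^8*x^2 + 2 * s^2*r^8*y^2 =
      (s^8+3 * s^4*r^4+r^8)*(r*x+s*y)^2 + 2*(r^2 * s^2)*(s^6*x^2 + r^6*y^2)" by algebra
  qed
  have st3: "(s^6 * r^6)*(x^2+y^2) \<le> s^6*x^2 + r^6*y^2"
  proof (rule lin5)
    show "(s^6 * r^6)*(x^2+y^2) = r^6 * (s^6*x^2) + s^6 * (r^6*y^2)" by algebra
    show "r^6 * (s^6*x^2) \<le> s^6*x^2" using mult_right_mono[OF r6, of "s^6*x^2"] by simp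
    show "s^6 * (r^6*y^2) \<le> r^6*y^2" using mult_right_mono[OF s6, of "r^6*y^2"] by simp
  qed
  have st4: "(s^3*x+r^3*y)^2 \<le> 2*(s^6*x^2 + r^6*y^2)"
  proof (rule lin2)
    show "2*(s^6*x^2 + r^6*y^2) - (s^3*x+r^3*y)^2 = (s^3*x - r^3*y)^2" by algebra
  qed simp
  have st5: "(r*x-s*y)^2 \<le> 2*(x^2+y^2)"
  proof (rule lin1)
    show "2*(r^2*x^2 + s^2*y^2) - (r*x-s*y)^2 = (r*x + s*y)^2" by algebra
    show "r^2*x^2 \<le> x^2" using mult_right_mono[OF r2, of "x^2"] by simp
    show "s^2*y^2 \<le> y^2" using mult_right_mono[OF s2, of "y^2"] by simp
  qed simp
  note st6 = KI_st6[OF D0 \<mu>0 st4 st5 st3 st2']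
  have id2: "(s^4+r^4)^3*(x^4+y^4) = (s^3*x+r^3*y)^4 + (r*x - s*y)^2 *
      ((s^8+3 * s^4*r^4+r^8)*(r*x+s*y)^2 + 2*r^2 * s^8*x^2 + 2 * s^2*r^8*y^2)"
    by (rule lin4[OF KI_ident])
  have m0: "0 \<le> s^4+r^4" by simp
  have m3: "(s^4+r^4)^3 \<le> 1" by (rule power_le_one[OF m0 m])
  have x4: "0 \<le> x^4+y^4" by simp
  show ?thesis by (rule KI_core[OF D0 D1 \<mu>0 \<mu>1 \<delta>D st6 id2 m3 x4])
qed




lemma lin_decomp: "linear S \<Longrightarrow> S (x,y) = x *\<^sub>R S (1,0) + y *\<^sub>R S (0,1)"
proof -
  assume L: "linear S"
  have "S (x,y) = S (x *\<^sub>R (1,0) + y *\<^sub>R ((0,1)::real\<times>real))" by simp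
  also have "\<dots> = S (x *\<^sub>R (1,0)) + S (y *\<^sub>R ((0,1)::real\<times>real))" by (rule linear_add[OF L])
  also have "\<dots> = x *\<^sub>R S (1,0) + y *\<^sub>R S (0,1)" by (simp only: linear_scale[OF L])
  finally show ?thesis .
qed

lemma norm4_one: "norm4 (x,y) = 1 \<longleftrightarrow> x^4+y^4 = 1"
  unfolding norm4_def by simp

lemma norm4_one': "norm4 u = 1 \<longleftrightarrow> fst u^4 + snd u^4 = 1"
  by (cases u) (simp add: norm4_one)

lemma coord_le1: assumes "x^4+y^4 = (1::real)" shows "\<bar>x\<bar> \<le> 1" "\<bar>y\<bar> \<le> 1"
proof -
  have "0 \<le> x^4" "0 \<le> y^4" by simp_all
  then have "x^4 \<le> 1" "y^4 \<le> 1" using assms by linarith+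
  then have "x^2 \<le> 1" "y^2 \<le> 1" using sq_le1 by blast+
  then show "\<bar>x\<bar> \<le> 1" "\<bar>y\<bar> \<le> 1" by (simp_all add: abs_square_le_1)
qed

lemma opn_bdd:
  fixes S :: "real \<times> real \<Rightarrow> 'h::real_normed_vector"
  assumes L: "linear S"
  shows "bdd_above ((\<lambda>u. norm (S u)) ` {u. norm4 u = 1})"
proof (rule bdd_aboveI2)
  fix u assume "u \<in> {u. norm4 u = 1}"
  then have u: "fst u^4 + snd u^4 = 1" by (simp add: norm4_one')
  obtain x y where xy: "u = (x,y)" by (cases u)
  have x1: "\<bar>x\<bar> \<le> 1" and y1: "\<bar>y\<bar> \<le> 1" using coord_le1[of x y] u xy by auto
  have "norm (S u) = norm (x *\<^sub>R S (1,0) + y *\<^sub>R S (0,1))" by (simp only: xy lin_decomp[OF L, of x y])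
  also have "\<dots> \<le> \<bar>x\<bar> * norm (S (1,0)) + \<bar>y\<bar> * norm (S (0,1))"
    by (rule order_trans[OF norm_triangle_ineq]) simp
  also have "\<dots> \<le> 1 * norm (S (1,0)) + 1 * norm (S (0,1))"
    by (intro add_mono mult_right_mono x1 y1) simp_all
  finally show "norm (S u) \<le> norm (S (1,0)) + norm (S (0,1))" by simp
qed

lemma opn_ge:
  fixes S :: "real \<times> real \<Rightarrow> 'h::real_normed_vector"
  assumes L: "linear S" and u: "norm4 u = 1"
  shows "norm (S u) \<le> opnorm4 S"
  unfolding opnorm4_def by (rule cSUP_upper[OF _ opn_bdd[OF L]]) (use u in simp)

lemma opn_le:
  fixes S :: "real \<times> real \<Rightarrow> 'h::real_normed_vector"
  assumes "\<And>u. norm4 u = 1 \<Longrightarrow> norm (S u) \<le> c"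
  shows "opnorm4 S \<le> c"
  unfolding opnorm4_def
proof (rule cSUP_least)
  have "(1,0) \<in> {u. norm4 u = 1}" by (simp add: norm4_one)
  then show "{u. norm4 u = 1} \<noteq> {}" by blast
qed (use assms in auto)

lemma Q_of_opn:
  fixes S :: "real \<times> real \<Rightarrow> 'h::real_normed_vector"
  assumes L: "linear S" and O: "opnorm4 S \<le> 1"
  shows "norm (S (x,y))^4 \<le> x^4 + y^4"
proof (cases "x^4 + y^4 = 0")
  case True
  then have "x = 0" "y = 0" by (simp_all add: add_nonneg_eq_0_iff)
  then show ?thesis using linear_0[OF L] by (simp add: zero_prod_def)
next
  case False
  define m where "m = x^4+y^4"
  have "0 \<le> m" unfolding m_def by simp
  then have m0: "0 < m" using False unfolding m_def by (simp add: less_le)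
  define \<rho> where "\<rho> = root 4 m"
  have \<rho>0: "0 < \<rho>" unfolding \<rho>_def using m0 by simp
  have \<rho>4: "\<rho>^4 = m" unfolding \<rho>_def using m0 by simp
  have "(x/\<rho>)^4 + (y/\<rho>)^4 = m/\<rho>^4" unfolding m_def by (simp add: power_divide add_divide_distrib)
  also have "\<dots> = 1" using \<rho>4 m0 by simp
  finally have "norm4 (x/\<rho>, y/\<rho>) = 1" by (simp add: norm4_one)
  then have le: "norm (S (x/\<rho>, y/\<rho>)) \<le> 1" using opn_ge[OF L] O by fastforce
  have "(x,y) = \<rho> *\<^sub>R (x/\<rho>, y/\<rho>)" using \<rho>0 by simp
  then have "S (x,y) = \<rho> *\<^sub>R S (x/\<rho>, y/\<rho>)" using linear_scale[OF L, of \<rho> "(x/\<rho>, y/\<rho>)"] by simp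
  then have "norm (S (x,y)) = \<rho> * norm (S (x/\<rho>, y/\<rho>))" using \<rho>0 by simp
  also have "\<dots> \<le> \<rho> * 1" using le \<rho>0 by (intro mult_left_mono) auto
  finally have "norm (S (x,y)) \<le> \<rho>" by simp
  then have "norm (S (x,y))^4 \<le> \<rho>^4" by (intro power_mono) auto
  then show ?thesis using \<rho>4 unfolding m_def by simp
qed

lemma opn_of_Q:
  fixes S :: "real \<times> real \<Rightarrow> 'h::real_normed_vector"
  assumes Q: "\<And>x y. norm (S (x,y))^4 \<le> x^4 + y^4"
  shows "opnorm4 S \<le> 1"
proof (rule opn_le)
  fix u :: "real \<times> real" assume "norm4 u = 1"
  then have u: "fst u^4 + snd u^4 = 1" by (simp add: norm4_one')
  have "norm (S u)^4 \<le> 1" using Q[of "fst u" "snd u"] u by simp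
  then show "norm (S u) \<le> 1" using power_le_one_iff[of "norm (S u)" 4] by simp
qed

lemma strict_conv:
  fixes A1 A2 :: "'h::real_inner"
  assumes n1: "norm A1 \<le> 1" and n2: "norm A2 \<le> 1" and t: "0 < t" "t < 1"
    and n: "norm (t *\<^sub>R A1 + (1-t) *\<^sub>R A2) = 1"
  shows "A1 = A2"
proof -
  have id: "norm (t *\<^sub>R A1 + (1-t) *\<^sub>R A2)^2 + t*(1-t)*norm (A1 - A2)^2
      = t*norm A1^2 + (1-t)*norm A2^2"
    unfolding power2_norm_eq_inner
    by (simp add: inner_add_left inner_add_right inner_diff_left inner_diff_right
        inner_commute[of A2 A1] algebra_simps power2_eq_square)
  have "norm A1^2 \<le> 1" "norm A2^2 \<le> 1" using n1 n2 by (simp_all add: abs_square_le_1)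
  then have "t*norm A1^2 + (1-t)*norm A2^2 \<le> t*1 + (1-t)*1"
    using t by (intro add_mono mult_left_mono) auto
  then have "t*(1-t)*norm (A1 - A2)^2 \<le> 0" using id n by simp
  then have h: "t*(1-t)*norm (A1 - A2)^2 \<le> t*(1-t)*0" by simp
  have pos: "0 < t*(1-t)" using t by simp
  have "norm (A1 - A2)^2 \<le> 0" by (rule mult_left_le_imp_le[OF h pos])
  then show ?thesis by simp
qed

lemma R0: fixes X Y :: real assumes "(1+X)^2 \<le> 1+Y" shows "2*X \<le> Y"
proof -
  have "(1+X)^2 = 1+2*X+X^2" by algebra
  moreover have "0 \<le> X^2" by simp
  ultimately show ?thesis using assms by linarith
qed

lemma R1:
  fixes s c w :: real
  assumes "(1 + 2* s*c + s^2*w)^2 \<le> 1 + s^4"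
  shows "4* s*c + 2* s^2*w \<le> s^4"
proof -
  have h: "(1 + (2* s*c + s^2*w))^2 \<le> 1 + s^4" using assms by (simp only: add.assoc)
  have R: "2*(2* s*c + s^2*w) \<le> s^4" by (rule R0[OF h])
  have E: "2*(2* s*c + s^2*w) = 4* s*c + 2* s^2*w" by algebra
  show ?thesis using R by (simp only: E)
qed

lemma core:
  fixes S :: "real \<times> real \<Rightarrow> 'h::real_inner"
  assumes L: "linear S" and Q: "\<And>x y. norm (S (x,y))^4 \<le> x^4 + y^4"
    and k: "S (1,0) = k" and nk: "norm k = 1"
  shows "S (0,1) = 0"
proof -
  define v where "v = S (0,1)"
  define c where "c = inner k v"
  define w where "w = inner v v"
  have kk: "inner k k = 1" using nk by (simp add: norm_eq_1)
  have gen: "4* s*c + 2* s^2*w \<le> s^4" for s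
  proof -
    have "S (1,s) = k + s *\<^sub>R v" using lin_decomp[OF L, of 1 s] k unfolding v_def by simp
    then have "norm (S (1,s))^2 = 1 + 2* s*c + s^2*w"
      unfolding power2_norm_eq_inner c_def w_def
      by (simp add: inner_add_left inner_add_right kk inner_commute[of v k] algebra_simps power2_eq_square)
    moreover have "norm (S (1,s))^4 = (norm (S (1,s))^2)^2" by algebra
    ultimately have "(1 + 2* s*c + s^2*w)^2 \<le> 1 + s^4" using Q[of 1 s] by simp
    then show ?thesis by (rule R1)
  qed
  have w0: "0 \<le> w" unfolding w_def by simp
  have "w \<le> 0"
  proof (rule ccontr)
    assume "\<not> w \<le> 0"
    then have wp: "0 < w" by simp
    define e where "e = sqrt w"
    have e2: "e^2 = w" unfolding e_def using wp by simp
    have e4: "e^4 = w^2" proof - have "e^4 = (e^2)^2" by algebra then show ?thesis using e2 by simp qed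
    have a: "4*e*c + 2*e^2*w \<le> e^4" by (rule gen)
    have b: "4*(-e)*c + 2*(-e)^2*w \<le> (-e)^4" by (rule gen)
    have "4*(-e)*c = -(4*e*c)" "(-e)^2 = e^2" "(-e)^4 = e^4" by simp_all
    then have b': "-(4*e*c) + 2*e^2*w \<le> e^4" using b by simp
    have "4*(e^2*w) \<le> 2*e^4" using a b' by linarith
    moreover have eqs: "e^2*w = w*w" "e^4 = w*w" using e2 e4 by (simp_all add: power2_eq_square)
    ultimately have "4*(w*w) \<le> 2*(w*w)" by (simp only: eqs)
    then have "w*w \<le> 0" by linarith
    then show False using wp by (simp add: mult_le_0_iff)
  qed
  then have "w = 0" using w0 by simp
  then show ?thesis unfolding w_def v_def by simp
qed




lemma swap_lin: "linear (\<lambda>u::real\<times>real. (snd u, fst u))"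
  by (rule linearI) simp_all

lemma core2:
  fixes S :: "real \<times> real \<Rightarrow> 'h::real_inner"
  assumes L: "linear S" and Q: "\<And>x y. norm (S (x,y))^4 \<le> x^4 + y^4"
    and k: "S (0,1) = k" and nk: "norm k = 1"
  shows "S (1,0) = 0"
proof -
  define S' where "S' = S \<circ> (\<lambda>u::real\<times>real. (snd u, fst u))"
  have L': "linear S'" unfolding S'_def by (rule linear_compose[OF swap_lin L])
  have Q': "norm (S' (x,y))^4 \<le> x^4 + y^4" for x y
    using Q[of y x] unfolding S'_def by (simp add: add.commute)
  have k': "S' (1,0) = k" unfolding S'_def using k by simp
  have "S' (0,1) = 0" by (rule core[OF L' Q' k' nk])
  then show ?thesis unfolding S'_def by simp
qed

lemma scale_comb: "t *\<^sub>R A + (1-t) *\<^sub>R A = (A::'a::real_vector)"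
proof -
  have "t *\<^sub>R A + (1-t) *\<^sub>R A = (t + (1-t)) *\<^sub>R A" using scaleR_add_left[of t "1-t" A] by simp
  then show ?thesis by simp
qed

lemma ball_facts:
  fixes S :: "real \<times> real \<Rightarrow> 'h::real_inner"
  assumes "S \<in> unit_ball4"
  shows "linear S" "\<And>x y. norm (S (x,y))^4 \<le> x^4 + y^4" "norm (S (1,0)) \<le> 1" "norm (S (0,1)) \<le> 1"
proof -
  show L: "linear S" using assms unfolding unit_ball4_def by simp
  have O: "opnorm4 S \<le> 1" using assms unfolding unit_ball4_def by simp
  show Q: "\<And>x y. norm (S (x,y))^4 \<le> x^4 + y^4" by (rule Q_of_opn[OF L O])
  have "norm (S (1,0))^4 \<le> 1" using Q[of 1 0] by simp
  then show "norm (S (1,0)) \<le> 1" using power_le_one_iff[of "norm (S (1,0))" 4] by simp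
  have "norm (S (0,1))^4 \<le> 1" using Q[of 0 1] by simp
  then show "norm (S (0,1)) \<le> 1" using power_le_one_iff[of "norm (S (0,1))" 4] by simp
qed

lemma ext1:
  fixes k :: "'h::real_inner"
  assumes nk: "norm k = 1"
  shows "extreme_contraction (\<lambda>u. fst u *\<^sub>R k)"
proof -
  let ?T = "\<lambda>u::real\<times>real. fst u *\<^sub>R k"
  have L: "linear ?T" by (rule linearI) (simp_all add: scaleR_add_left)
  have O: "opnorm4 ?T = 1"
  proof (rule antisym)
    show "opnorm4 ?T \<le> 1"
    proof (rule opn_le)
      fix u :: "real\<times>real" assume "norm4 u = 1"
      then have "\<bar>fst u\<bar> \<le> 1" using coord_le1 by (simp add: norm4_one')
      then show "norm (fst u *\<^sub>R k) \<le> 1" using nk by simp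
    qed
    show "1 \<le> opnorm4 ?T" using opn_ge[OF L, of "(1,0)"] nk by (simp add: norm4_one)
  qed
  have B: "?T \<in> unit_ball4" unfolding unit_ball4_def using L O by simp
  have X: "S1 = S2" if S1: "S1 \<in> unit_ball4" and S2: "S2 \<in> unit_ball4" and t: "0 < t" "t < 1"
    and eq: "?T = (\<lambda>u. t *\<^sub>R S1 u + (1 - t) *\<^sub>R S2 u)" for S1 S2 :: "real\<times>real \<Rightarrow> 'h" and t :: real
  proof -
    note f1 = ball_facts[OF S1] and f2 = ball_facts[OF S2]
    have e: "k = t *\<^sub>R S1 (1,0) + (1 - t) *\<^sub>R S2 (1,0)" using fun_cong[OF eq, of "(1,0)"] by simp
    have A: "S1 (1,0) = S2 (1,0)" by (rule strict_conv[OF f1(3) f2(3) t]) (use e nk in simp)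
    then have k1: "S1 (1,0) = k" using e by (simp add: scale_comb)
    have k2: "S2 (1,0) = k" using k1 A by simp
    have z1: "S1 (0,1) = 0" by (rule core[OF f1(1) f1(2) k1 nk])
    have z2: "S2 (0,1) = 0" by (rule core[OF f2(1) f2(2) k2 nk])
    show "S1 = S2"
    proof
      fix u :: "real\<times>real"
      obtain x y where u: "u = (x,y)" by (cases u)
      show "S1 u = S2 u"
        unfolding u lin_decomp[OF f1(1), of x y] lin_decomp[OF f2(1), of x y] using k1 k2 z1 z2 by simp
    qed
  qed
  show ?thesis unfolding extreme_contraction_def using L O B X by blast
qed

lemma ext2:
  fixes k :: "'h::real_inner"
  assumes nk: "norm k = 1"
  shows "extreme_contraction (\<lambda>u. snd u *\<^sub>R k)"
proof -
  let ?T = "\<lambda>u::real\<times>real. snd u *\<^sub>R k"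
  have L: "linear ?T" by (rule linearI) (simp_all add: scaleR_add_left)
  have O: "opnorm4 ?T = 1"
  proof (rule antisym)
    show "opnorm4 ?T \<le> 1"
    proof (rule opn_le)
      fix u :: "real\<times>real" assume "norm4 u = 1"
      then have "\<bar>snd u\<bar> \<le> 1" using coord_le1 by (simp add: norm4_one')
      then show "norm (snd u *\<^sub>R k) \<le> 1" using nk by simp
    qed
    show "1 \<le> opnorm4 ?T" using opn_ge[OF L, of "(0,1)"] nk by (simp add: norm4_one)
  qed
  have B: "?T \<in> unit_ball4" unfolding unit_ball4_def using L O by simp
  have X: "S1 = S2" if S1: "S1 \<in> unit_ball4" and S2: "S2 \<in> unit_ball4" and t: "0 < t" "t < 1"
    and eq: "?T = (\<lambda>u. t *\<^sub>R S1 u + (1 - t) *\<^sub>R S2 u)" for S1 S2 :: "real\<times>real \<Rightarrow> 'h" and t :: real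
  proof -
    note f1 = ball_facts[OF S1] and f2 = ball_facts[OF S2]
    have e: "k = t *\<^sub>R S1 (0,1) + (1 - t) *\<^sub>R S2 (0,1)" using fun_cong[OF eq, of "(0,1)"] by simp
    have A: "S1 (0,1) = S2 (0,1)" by (rule strict_conv[OF f1(4) f2(4) t]) (use e nk in simp)
    then have k1: "S1 (0,1) = k" using e by (simp add: scale_comb)
    have k2: "S2 (0,1) = k" using k1 A by simp
    have z1: "S1 (1,0) = 0" by (rule core2[OF f1(1) f1(2) k1 nk])
    have z2: "S2 (1,0) = 0" by (rule core2[OF f2(1) f2(2) k2 nk])
    show "S1 = S2"
    proof
      fix u :: "real\<times>real"
      obtain x y where u: "u = (x,y)" by (cases u)
      show "S1 u = S2 u"
        unfolding u lin_decomp[OF f1(1), of x y] lin_decomp[OF f2(1), of x y] using k1 k2 z1 z2 by simp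
    qed
  qed
  show ?thesis unfolding extreme_contraction_def using L O B X by blast
qed

lemma rank1:
  fixes T :: "real \<times> real \<Rightarrow> 'h::real_inner"
  assumes L: "linear T" and d: "dim (range T) = 1"
  obtains a b h where "norm h = 1" "\<And>u. T u = (a * fst u + b * snd u) *\<^sub>R h"
proof -
  obtain B where B: "B \<subseteq> range T" "independent B" "range T \<subseteq> span B" "card B = dim (range T)"
    by (rule basis_exists)
  then have "card B = 1" using d by simp
  then obtain h0 where h0: "B = {h0}" by (rule card_1_singletonE)
  have h00: "h0 \<noteq> 0" using B(2) h0 by simp
  have "T (1,0) \<in> span {h0}" using B(3) h0 by auto
  then obtain c1 where c1: "T (1,0) = c1 *\<^sub>R h0" by (auto simp: span_singleton)
  have "T (0,1) \<in> span {h0}" using B(3) h0 by auto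
  then obtain c2 where c2: "T (0,1) = c2 *\<^sub>R h0" by (auto simp: span_singleton)
  define h where "h = inverse (norm h0) *\<^sub>R h0"
  have nh: "norm h = 1" using h00 by (simp add: h_def)
  show thesis
  proof (rule that[of h "c1 * norm h0" "c2 * norm h0"])
    show "norm h = 1" by (rule nh)
    fix u :: "real\<times>real"
    obtain x y where u: "u = (x,y)" by (cases u)
    have "T u = x *\<^sub>R T (1,0) + y *\<^sub>R T (0,1)" unfolding u by (rule lin_decomp[OF L])
    also have "\<dots> = (x*c1 + y*c2) *\<^sub>R h0" unfolding c1 c2 by (simp add: scaleR_add_left)
    also have "\<dots> = ((x*c1 + y*c2) * norm h0) *\<^sub>R h" using h00 by (simp add: h_def)
    also have "(x*c1 + y*c2) * norm h0 = (c1 * norm h0) * fst u + (c2 * norm h0) * snd u"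
      unfolding u by (simp add: algebra_simps)
    finally show "T u = ((c1 * norm h0) * fst u + (c2 * norm h0) * snd u) *\<^sub>R h" .
  qed
qed

lemma orth:
  fixes h :: "'h::real_inner"
  assumes ind: "\<exists>x y::'h. x \<noteq> y \<and> independent {x,y}" and nh: "norm h = 1"
  obtains k where "norm k = 1" "inner k h = 0"
proof -
  from ind obtain x y :: 'h where xy0: "x \<noteq> y \<and> independent {x,y}" by iprover
  then have xy: "x \<noteq> y" "independent {x,y}" by simp_all
  have "\<exists>z\<in>{x,y}. z \<notin> span {h}"
  proof (rule ccontr)
    assume "\<not> (\<exists>z\<in>{x,y}. z \<notin> span {h})"
    then have sub: "{x,y} \<subseteq> span {h}" by auto
    have "card {x,y} \<le> card {h}" using independent_span_bound[OF _ xy(2) sub] by simp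
    then show False using xy(1) by simp
  qed
  then obtain z where z: "z \<notin> span {h}" by blast
  define k0 where "k0 = z - inner z h *\<^sub>R h"
  have hh: "inner h h = 1" using nh by (simp add: norm_eq_1)
  have k0h: "inner k0 h = 0" unfolding k0_def by (simp add: inner_diff_left hh)
  have k00: "k0 \<noteq> 0"
  proof
    assume "k0 = 0"
    then have "z = inner z h *\<^sub>R h" unfolding k0_def by simp
    moreover have "inner z h *\<^sub>R h \<in> span {h}" by (intro span_scale span_base) simp
    ultimately show False using z by simp
  qed
  define k where "k = inverse (norm k0) *\<^sub>R k0"
  show thesis
  proof (rule that[of k])
    show "norm k = 1" using k00 by (simp add: k_def)
    show "inner k h = 0" using k0h by (simp add: k_def)
  qed
qed




lemma pyth:
  fixes h k :: "'h::real_inner"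
  assumes nh: "norm h = 1" and nk: "norm k = 1" and kh: "inner k h = 0"
  shows "norm (p *\<^sub>R h + q *\<^sub>R k)^2 = p^2 + q^2"
proof -
  have hh: "inner h h = 1" using nh by (simp add: norm_eq_1)
  have kk: "inner k k = 1" using nk by (simp add: norm_eq_1)
  have hk: "inner h k = 0" using kh by (simp add: inner_commute)
  show ?thesis unfolding power2_norm_eq_inner
    by (simp add: inner_add_left inner_add_right hh kk hk kh power2_eq_square)
qed

lemma half2: "(p/2) *\<^sub>R v + (p/2) *\<^sub>R v = p *\<^sub>R (v::'a::real_vector)"
  using scaleR_add_left[of "p/2" "p/2" v] by simp
lemma half2': "(p/2) *\<^sub>R v + ((p/2) *\<^sub>R v + w) = p *\<^sub>R (v::'a::real_vector) + w"
  using half2[of p v] by (simp add: add.assoc[symmetric])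

lemma m_le1: fixes m :: real assumes m0: "0 < m" and h: "m^4 \<le> m" shows "m \<le> 1"
proof -
  have "m * m^3 \<le> m * 1" using h by (simp add: power_Suc[symmetric] del: power_Suc)
  then have "m^3 \<le> 1" by (rule mult_left_le_imp_le[OF _ m0])
  then show ?thesis using power_le_one_iff[of m 3] m0 by simp
qed

lemma notext:
  fixes h k :: "'h::real_inner"
  assumes a: "a \<noteq> 0" and b: "b \<noteq> 0" and nh: "norm h = 1" and nk: "norm k = 1" and kh: "inner k h = 0"
  shows "\<not> extreme_contraction (\<lambda>u. (a*fst u + b* snd u) *\<^sub>R h)"
proof
  let ?T = "\<lambda>u::real\<times>real. (a*fst u + b* snd u) *\<^sub>R h"
  assume E: "extreme_contraction ?T"
  then have L: "linear ?T" and O: "opnorm4 ?T = 1"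
    and ball: "\<And>S1 S2 t. S1 \<in> unit_ball4 \<Longrightarrow> S2 \<in> unit_ball4 \<Longrightarrow> 0 < t \<and> t < 1 \<and>
        ?T = (\<lambda>u. t *\<^sub>R S1 u + (1 - t) *\<^sub>R S2 u) \<Longrightarrow> S1 = S2"
    unfolding extreme_contraction_def by blast+
  have Q: "(a*x + b*y)^4 \<le> x^4+y^4" for x y
    using Q_of_opn[OF L, of x y] O nh by simp
  define s where "s = root 3 a"
  define r where "r = root 3 b"
  have s3: "s^3 = a" unfolding s_def by (simp add: odd_real_root_pow)
  have r3: "r^3 = b" unfolding r_def by (simp add: odd_real_root_pow)
  have sn: "s \<noteq> 0" using a s3 by auto
  have rn: "r \<noteq> 0" using b r3 by auto
  define m where "m = s^4+r^4"
  have m0: "0 < m" unfolding m_def using sn by (simp add: add_pos_nonneg)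
  have "(a* s + b*r)^4 \<le> s^4+r^4" by (rule Q)
  moreover have "a* s + b*r = m" unfolding m_def s3[symmetric] r3[symmetric] by algebra
  ultimately have "m^4 \<le> m" unfolding m_def by simp
  then have m1: "s^4+r^4 \<le> 1" using m_le1[OF m0] unfolding m_def by simp
  define \<delta> where "\<delta> = r^8 * s^8/4"
  define S where "S c = (\<lambda>u::real\<times>real. (a*fst u + b* snd u) *\<^sub>R h + (c*(r*fst u - s* snd u)) *\<^sub>R k)" for c
  have SL: "linear (S c)" for c
    by (rule linearI) (simp_all add: S_def algebra_simps)
  have SQ: "norm (S c (x,y))^4 \<le> x^4+y^4" if c: "c^2 = \<delta>^2" for c x y
  proof -
    have "norm (S c (x,y))^2 = (a*x+b*y)^2 + (c*(r*x - s*y))^2"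
      unfolding S_def by (simp add: pyth[OF nh nk kh])
    also have "\<dots> = (a*x+b*y)^2 + \<delta>^2*(r*x - s*y)^2" using c by (simp add: power_mult_distrib)
    finally have e: "norm (S c (x,y))^2 = (a*x+b*y)^2 + \<delta>^2*(r*x - s*y)^2" .
    have "norm (S c (x,y))^4 = (norm (S c (x,y))^2)^2" by algebra
    also have "\<dots> = ((a*x+b*y)^2 + \<delta>^2*(r*x - s*y)^2)^2" unfolding e ..
    also have "\<dots> \<le> x^4+y^4" using KI[OF sn rn m1, of x y] unfolding s3 r3 \<delta>_def .
    finally show ?thesis .
  qed
  have SB: "S c \<in> unit_ball4" if c: "c^2 = \<delta>^2" for c
    unfolding unit_ball4_def using SL opn_of_Q[OF SQ[OF c]] by simp
  have TS: "?T = (\<lambda>u. (1/2) *\<^sub>R S \<delta> u + (1 - 1/2) *\<^sub>R S (-\<delta>) u)"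
    by (rule ext) (simp add: S_def algebra_simps half2 half2')
  have "S \<delta> = S (-\<delta>)" by (rule ball[OF SB SB, where t="1/2"]) (use TS in simp_all)
  then have "inner (S \<delta> (1,0)) k = inner (S (-\<delta>) (1,0)) k" by simp
  moreover have "inner (S c (1,0)) k = c * r" for c
  proof -
    have kk: "inner k k = 1" using nk by (simp add: norm_eq_1)
    have hk: "inner h k = 0" using kh by (simp add: inner_commute)
    show ?thesis unfolding S_def by (simp add: inner_add_left kk hk)
  qed
  ultimately have "\<delta> * r = - \<delta> * r" by simp
  moreover have "\<delta> \<noteq> 0" unfolding \<delta>_def using sn rn by simp
  ultimately show False using rn by simp
qed




lemma MTset1: "{u::real\<times>real. fst u^4 + snd u^4 = 1 \<and> \<bar>fst u\<bar> = 1} = {(1,0),(-1,0)}"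
proof (intro set_eqI iffI)
  fix u :: "real\<times>real" assume "u \<in> {u::real\<times>real. fst u^4 + snd u^4 = 1 \<and> \<bar>fst u\<bar> = 1}"
  then have h: "fst u^4 + snd u^4 = 1" "\<bar>fst u\<bar> = 1" by auto
  have f: "fst u = 1 \<or> fst u = -1" using h(2) by auto
  then have "fst u^4 = 1" by auto
  then have "snd u^4 = 0" using h(1) by simp
  then have "snd u = 0" by simp
  then show "u \<in> {(1,0),(-1,0)}" using f by (cases u) auto
qed auto

lemma MTset2: "{u::real\<times>real. fst u^4 + snd u^4 = 1 \<and> \<bar>snd u\<bar> = 1} = {(0,1),(0,-1)}"
proof (intro set_eqI iffI)
  fix u :: "real\<times>real" assume "u \<in> {u::real\<times>real. fst u^4 + snd u^4 = 1 \<and> \<bar>snd u\<bar> = 1}"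
  then have h: "fst u^4 + snd u^4 = 1" "\<bar>snd u\<bar> = 1" by auto
  have f: "snd u = 1 \<or> snd u = -1" using h(2) by auto
  then have "snd u^4 = 1" by auto
  then have "fst u^4 = 0" using h(1) by simp
  then have "fst u = 0" by simp
  then show "u \<in> {(0,1),(0,-1)}" using f by (cases u) auto
qed auto

lemma R2: fixes a b :: real assumes a: "\<bar>a\<bar> = 1" and Q: "\<And>x y. (a*x + b*y)^4 \<le> x^4+y^4"
  shows "b = 0"
proof (rule ccontr)
  assume bn: "b \<noteq> 0"
  have af: "a = 1 \<or> a = -1" using a by auto
  have a2: "a*a = 1" using af by auto
  have e2: "a^4 = 1" using af by auto
  define t where "t = 1/(1+b^2)"
  have b2: "0 < b^2" using bn by simp
  have b21: "0 < 1 + b^2" using b2 by linarith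
  have t0: "0 < t" unfolding t_def using b21 by simp
  have "1 \<le> 1 + b^2" using b2 by linarith
  then have t1: "t \<le> 1" unfolding t_def using b21 by (simp add: divide_le_eq_1)
  define X where "X = t*b^2"
  have X0: "0 < X" using t0 b2 by (simp add: X_def)
  have X1: "X < 1" unfolding X_def t_def using b2 b21 by simp
  have e1: "a*a + b*(t*b) = 1 + X" using a2 unfolding X_def by (simp add: power2_eq_square algebra_simps)
  have e3: "(t*b)^4 = X*(t^3*b^2)" unfolding X_def by algebra
  have t2: "t^2 \<le> 1" using t0 t1 by (simp add: power_le_one)
  have "t*t^2 \<le> t*1" by (rule mult_left_mono[OF t2]) (use t0 in simp)
  moreover have "t^3 = t*t^2" by algebra
  ultimately have t3: "t^3 \<le> t" by simp
  have "t^3*b^2 \<le> t*b^2" by (rule mult_right_mono[OF t3]) simp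
  then have "X*(t^3*b^2) \<le> X*X" unfolding X_def[symmetric] using X0 by (intro mult_left_mono) auto
  moreover have "X*X < X*1" by (rule mult_strict_left_mono[OF X1 X0])
  ultimately have Y: "(t*b)^4 < X" using e3 by simp
  have P: "1 + 4*X \<le> (1+X)^4"
  proof -
    have "(1+X)^4 = 1 + 4*X + (6*X^2 + 4*X^3 + X^4)" by algebra
    moreover have "0 \<le> 6*X^2 + 4*X^3 + X^4" using X0 by simp
    ultimately show ?thesis by linarith
  qed
  have "(a*a + b*(t*b))^4 \<le> a^4 + (t*b)^4" by (rule Q)
  then have "(1+X)^4 \<le> 1 + (t*b)^4" unfolding e1 e2 .
  then show False using P Y X0 by linarith
qed

lemma charac:
  fixes T :: "real \<times> real \<Rightarrow> 'h::real_inner"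
  assumes ind: "\<exists>x y::'h. x \<noteq> y \<and> independent {x,y}" and L: "linear T" and d: "dim (range T) = 1"
    and O: "opnorm4 T = 1"
  shows "extreme_contraction T \<longleftrightarrow> (\<exists>k. norm k = 1 \<and> (T = (\<lambda>u. fst u *\<^sub>R k) \<or> T = (\<lambda>u. snd u *\<^sub>R k)))"
    and "extreme_contraction T \<longleftrightarrow> (MT T = {(1, 0), (-1, 0)} \<or> MT T = {(0, 1), (0, -1)})"
proof -
  obtain h a b where nh: "norm h = 1" and Tf: "\<And>u. T u = (a * fst u + b * snd u) *\<^sub>R h"
    by (rule rank1[OF L d]) blast
  have Teq: "T = (\<lambda>u. (a * fst u + b * snd u) *\<^sub>R h)" by (rule ext) (rule Tf)
  obtain k where nk: "norm k = 1" and kh: "inner k h = 0" by (rule orth[OF ind nh])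
  have nT: "norm (T u) = \<bar>a * fst u + b * snd u\<bar>" for u using nh by (simp add: Tf)
  have MTe: "MT T = {u. fst u^4 + snd u^4 = 1 \<and> \<bar>a * fst u + b * snd u\<bar> = 1}"
    unfolding MT_def O by (simp add: norm4_one' nT)
  have Q: "(a*x + b*y)^4 \<le> x^4+y^4" for x y
    using Q_of_opn[OF L, of x y] O nT[of "(x,y)"] by simp
  have Q': "(b*x + a*y)^4 \<le> x^4+y^4" for x y
    using Q[of y x] by (simp add: add.commute)
  have opa: "\<bar>a\<bar> = 1" if b0: "b = 0"
  proof (rule antisym)
    show "\<bar>a\<bar> \<le> 1" using opn_ge[OF L, of "(1,0)"] O nT[of "(1,0)"] by (simp add: norm4_one)
    have "opnorm4 T \<le> \<bar>a\<bar>"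
    proof (rule opn_le)
      fix u :: "real\<times>real" assume "norm4 u = 1"
      then have "\<bar>fst u\<bar> \<le> 1" using coord_le1 by (simp add: norm4_one')
      then have "\<bar>a\<bar> * \<bar>fst u\<bar> \<le> \<bar>a\<bar> * 1" by (intro mult_left_mono) auto
      then show "norm (T u) \<le> \<bar>a\<bar>" using b0 by (simp add: nT abs_mult)
    qed
    then show "1 \<le> \<bar>a\<bar>" using O by simp
  qed
  have opb: "\<bar>b\<bar> = 1" if a0: "a = 0"
  proof (rule antisym)
    show "\<bar>b\<bar> \<le> 1" using opn_ge[OF L, of "(0,1)"] O nT[of "(0,1)"] by (simp add: norm4_one)
    have "opnorm4 T \<le> \<bar>b\<bar>"
    proof (rule opn_le)
      fix u :: "real\<times>real" assume "norm4 u = 1"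
      then have "\<bar>snd u\<bar> \<le> 1" using coord_le1 by (simp add: norm4_one')
      then have "\<bar>b\<bar> * \<bar>snd u\<bar> \<le> \<bar>b\<bar> * 1" by (intro mult_left_mono) auto
      then show "norm (T u) \<le> \<bar>b\<bar>" using a0 by (simp add: nT abs_mult)
    qed
    then show "1 \<le> \<bar>b\<bar>" using O by simp
  qed
  have F1: "(b = 0 \<and> \<bar>a\<bar> = 1) \<or> (a = 0 \<and> \<bar>b\<bar> = 1)" if E: "extreme_contraction T"
  proof -
    have "a = 0 \<or> b = 0" using notext[OF _ _ nh nk kh, of a b] E Teq by blast
    then show ?thesis using opa opb by blast
  qed
  have MT1: "MT T = {(1, 0), (-1, 0)}" if "b = 0" "\<bar>a\<bar> = 1"
  proof -
    have "MT T = {u::real\<times>real. fst u^4 + snd u^4 = 1 \<and> \<bar>fst u\<bar> = 1}"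
      unfolding MTe using that by (simp add: abs_mult)
    then show ?thesis using MTset1 by simp
  qed
  have MT2: "MT T = {(0, 1), (0, -1)}" if "a = 0" "\<bar>b\<bar> = 1"
  proof -
    have "MT T = {u::real\<times>real. fst u^4 + snd u^4 = 1 \<and> \<bar>snd u\<bar> = 1}"
      unfolding MTe using that by (simp add: abs_mult)
    then show ?thesis using MTset2 by simp
  qed
  have T1: "T = (\<lambda>u. fst u *\<^sub>R (a *\<^sub>R h)) \<and> norm (a *\<^sub>R h) = 1" if "b = 0" "\<bar>a\<bar> = 1"
    using that nh by (simp add: Teq mult.commute)
  have T2: "T = (\<lambda>u. snd u *\<^sub>R (b *\<^sub>R h)) \<and> norm (b *\<^sub>R h) = 1" if "a = 0" "\<bar>b\<bar> = 1"
    using that nh by (simp add: Teq mult.commute)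
  have F2: "extreme_contraction T" if "(b = 0 \<and> \<bar>a\<bar> = 1) \<or> (a = 0 \<and> \<bar>b\<bar> = 1)"
    using that T1 T2 ext1 ext2 by metis
  have F3: "(b = 0 \<and> \<bar>a\<bar> = 1) \<or> (a = 0 \<and> \<bar>b\<bar> = 1)"
    if M: "MT T = {(1, 0), (-1, 0)} \<or> MT T = {(0, 1), (0, -1)}"
    using M
  proof
    assume "MT T = {(1, 0), (-1, 0)}"
    then have "(1,0) \<in> MT T" by simp
    then have a1: "\<bar>a\<bar> = 1" unfolding MTe by simp
    then have "b = 0" using R2[OF a1 Q] by simp
    then show ?thesis using a1 by simp
  next
    assume "MT T = {(0, 1), (0, -1)}"
    then have "(0,1) \<in> MT T" by simp
    then have b1: "\<bar>b\<bar> = 1" unfolding MTe by simp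
    then have "a = 0" using R2[OF b1 Q'] by simp
    then show ?thesis using b1 by simp
  qed
  show "extreme_contraction T \<longleftrightarrow> (\<exists>k. norm k = 1 \<and> (T = (\<lambda>u. fst u *\<^sub>R k) \<or> T = (\<lambda>u. snd u *\<^sub>R k)))"
  proof
    assume "extreme_contraction T"
    then have "(b = 0 \<and> \<bar>a\<bar> = 1) \<or> (a = 0 \<and> \<bar>b\<bar> = 1)" by (rule F1)
    then show "\<exists>k. norm k = 1 \<and> (T = (\<lambda>u. fst u *\<^sub>R k) \<or> T = (\<lambda>u. snd u *\<^sub>R k))"
      using T1 T2 by blast
  next
    assume "\<exists>k. norm k = 1 \<and> (T = (\<lambda>u. fst u *\<^sub>R k) \<or> T = (\<lambda>u. snd u *\<^sub>R k))"
    then show "extreme_contraction T" using ext1 ext2 by blast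
  qed
  show "extreme_contraction T \<longleftrightarrow> (MT T = {(1, 0), (-1, 0)} \<or> MT T = {(0, 1), (0, -1)})"
  proof
    assume "extreme_contraction T"
    then have "(b = 0 \<and> \<bar>a\<bar> = 1) \<or> (a = 0 \<and> \<bar>b\<bar> = 1)" by (rule F1)
    then show "MT T = {(1, 0), (-1, 0)} \<or> MT T = {(0, 1), (0, -1)}" using MT1 MT2 by blast
  next
    assume "MT T = {(1, 0), (-1, 0)} \<or> MT T = {(0, 1), (0, -1)}"
    then show "extreme_contraction T" by (intro F2 F3)
  qed
qed




lemma ind_vec:
  assumes c2: "CARD('n::finite) \<ge> 2"
  shows "\<exists>x y::real^'n. x \<noteq> y \<and> independent {x,y}"
proof -
  obtain i :: 'n where "True" by simp
  have "\<exists>j::'n. j \<noteq> i"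
  proof (rule ccontr)
    assume "\<not> (\<exists>j::'n. j \<noteq> i)"
    then have "(UNIV::'n set) = {i}" by auto
    then have "card (UNIV::'n set) = card {i}" by (rule arg_cong)
    then have "CARD('n) = 1" by simp
    then show False using c2 by simp
  qed
  then obtain j :: 'n where ji: "j \<noteq> i" by blast
  define x :: "real^'n" where "x = axis i 1"
  define y :: "real^'n" where "y = axis j 1"
  have xy: "x \<noteq> y" unfolding x_def y_def using ji by (simp add: axis_eq_axis)
  have o: "inner x y = 0" "inner y x = 0" unfolding x_def y_def using ji by (simp_all add: inner_axis_axis)
  have "pairwise orthogonal {x,y}" using o unfolding pairwise_def orthogonal_def by auto
  moreover have "0 \<notin> {x,y}" unfolding x_def y_def by (auto simp: axis_eq_0_iff)
  ultimately have "independent {x,y}" by (rule pairwise_orthogonal_independent)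
  then show ?thesis using xy by blast
qed

lemma sum_sq_norm: fixes x :: "real^'n" shows "(\<Sum>i\<in>UNIV. (x $ i)^2) = norm x ^ 2"
proof -
  have "norm x ^ 2 = inner x x" by (rule power2_norm_eq_inner)
  also have "\<dots> = (\<Sum>i\<in>UNIV. x $ i * x $ i)" by (simp add: inner_vec_def)
  finally show ?thesis by (simp add: power2_eq_square)
qed

lemma dim_fst:
  fixes x :: "'h::real_vector" assumes "x \<noteq> 0"
  shows "dim (range (\<lambda>u::real\<times>real. fst u *\<^sub>R x)) = 1" "dim (range (\<lambda>u::real\<times>real. snd u *\<^sub>R x)) = 1"
proof -
  have r1: "range (\<lambda>u::real\<times>real. fst u *\<^sub>R x) = span {x}"
  proof
    show "range (\<lambda>u::real\<times>real. fst u *\<^sub>R x) \<subseteq> span {x}" by (auto simp: span_singleton)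
    show "span {x} \<subseteq> range (\<lambda>u::real\<times>real. fst u *\<^sub>R x)"
    proof
      fix z assume "z \<in> span {x}"
      then obtain c where c: "z = c *\<^sub>R x" by (auto simp: span_singleton)
      have "c *\<^sub>R x = (\<lambda>u::real\<times>real. fst u *\<^sub>R x) (c,0)" by simp
      then show "z \<in> range (\<lambda>u::real\<times>real. fst u *\<^sub>R x)" using c by (metis rangeI)
    qed
  qed
  have r2: "range (\<lambda>u::real\<times>real. snd u *\<^sub>R x) = span {x}"
  proof
    show "range (\<lambda>u::real\<times>real. snd u *\<^sub>R x) \<subseteq> span {x}" by (auto simp: span_singleton)
    show "span {x} \<subseteq> range (\<lambda>u::real\<times>real. snd u *\<^sub>R x)"
    proof
      fix z assume "z \<in> span {x}"
      then obtain c where c: "z = c *\<^sub>R x" by (auto simp: span_singleton)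
      have "c *\<^sub>R x = (\<lambda>u::real\<times>real. snd u *\<^sub>R x) (0,c)" by simp
      then show "z \<in> range (\<lambda>u::real\<times>real. snd u *\<^sub>R x)" using c by (metis rangeI)
    qed
  qed
  show "dim (range (\<lambda>u::real\<times>real. fst u *\<^sub>R x)) = 1" unfolding r1 using assms by (simp add: dim_eq_card_independent)
  show "dim (range (\<lambda>u::real\<times>real. snd u *\<^sub>R x)) = 1" unfolding r2 using assms by (simp add: dim_eq_card_independent)
qed

theorem mainTheorem14:
  shows "((\<exists>x y :: 'h::{real_inner, complete_space}. x \<noteq> y \<and> independent {x, y}) \<longrightarrow>
          (\<forall>T :: real \<times> real \<Rightarrow> 'h. linear T \<and> dim (range T) = 1 \<and> opnorm4 T = 1 \<longrightarrow>
             (extreme_contraction T \<longleftrightarrow>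
                (MT T = {(1, 0), (-1, 0)} \<or> MT T = {(0, 1), (0, -1)}))))
       \<and> (CARD('n::finite) \<ge> 2 \<longrightarrow>
          (\<forall>T :: real \<times> real \<Rightarrow> real ^ 'n.
             (linear T \<and> dim (range T) = 1 \<and> extreme_contraction T) \<longleftrightarrow>
             (\<exists>x :: real ^ 'n. (\<Sum>i\<in>UNIV. (x $ i) ^ 2) = 1 \<and>
                 (T = (\<lambda>u. fst u *\<^sub>R x) \<or> T = (\<lambda>u. snd u *\<^sub>R x)))))"
proof (intro conjI impI allI)
  fix T :: "real \<times> real \<Rightarrow> 'h"
  assume ind: "\<exists>x y :: 'h. x \<noteq> y \<and> independent {x, y}"
    and H: "linear T \<and> dim (range T) = 1 \<and> opnorm4 T = 1"
  then show "extreme_contraction T \<longleftrightarrow> (MT T = {(1, 0), (-1, 0)} \<or> MT T = {(0, 1), (0, -1)})"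
    using charac(2)[of T] by blast
next
  fix T :: "real \<times> real \<Rightarrow> real ^ 'n"
  assume c2: "CARD('n::finite) \<ge> 2"
  note ind = ind_vec[OF c2]
  show "(linear T \<and> dim (range T) = 1 \<and> extreme_contraction T) \<longleftrightarrow>
             (\<exists>x :: real ^ 'n. (\<Sum>i\<in>UNIV. (x $ i) ^ 2) = 1 \<and>
                 (T = (\<lambda>u. fst u *\<^sub>R x) \<or> T = (\<lambda>u. snd u *\<^sub>R x)))"
  proof
    assume H: "linear T \<and> dim (range T) = 1 \<and> extreme_contraction T"
    then have O: "opnorm4 T = 1" unfolding extreme_contraction_def by blast
    have "\<exists>k. norm k = 1 \<and> (T = (\<lambda>u. fst u *\<^sub>R k) \<or> T = (\<lambda>u. snd u *\<^sub>R k))"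
      using charac(1)[OF ind _ _ O] H by blast
    then obtain k :: "real^'n" where k: "norm k = 1" "T = (\<lambda>u. fst u *\<^sub>R k) \<or> T = (\<lambda>u. snd u *\<^sub>R k)"
      by blast
    have "(\<Sum>i\<in>UNIV. (k $ i) ^ 2) = 1" using k(1) by (simp add: sum_sq_norm)
    then show "\<exists>x :: real ^ 'n. (\<Sum>i\<in>UNIV. (x $ i) ^ 2) = 1 \<and>
                 (T = (\<lambda>u. fst u *\<^sub>R x) \<or> T = (\<lambda>u. snd u *\<^sub>R x))" using k(2) by blast
  next
    assume "\<exists>x :: real ^ 'n. (\<Sum>i\<in>UNIV. (x $ i) ^ 2) = 1 \<and>
                 (T = (\<lambda>u. fst u *\<^sub>R x) \<or> T = (\<lambda>u. snd u *\<^sub>R x))"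
    then obtain x :: "real^'n" where x: "(\<Sum>i\<in>UNIV. (x $ i) ^ 2) = 1"
      and T: "T = (\<lambda>u. fst u *\<^sub>R x) \<or> T = (\<lambda>u. snd u *\<^sub>R x)" by blast
    have "norm x ^ 2 = 1" using x by (simp add: sum_sq_norm)
    then have nx: "norm x = 1" using power2_eq_iff_nonneg[of "norm x" 1] by simp
    then have x0: "x \<noteq> 0" by auto
    show "linear T \<and> dim (range T) = 1 \<and> extreme_contraction T"
      using T
    proof
      assume T1: "T = (\<lambda>u. fst u *\<^sub>R x)"
      have E: "extreme_contraction T" unfolding T1 by (rule ext1[OF nx])
      then show ?thesis using dim_fst(1)[OF x0] T1 unfolding extreme_contraction_def by simp
    next
      assume T2: "T = (\<lambda>u. snd u *\<^sub>R x)"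
      have E: "extreme_contraction T" unfolding T2 by (rule ext2[OF nx])
      then show ?thesis using dim_fst(2)[OF x0] T2 unfolding extreme_contraction_def by simp
    qed
  qed
qed


end
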